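(* Let $\mathcal{H}$ be a finite-dimensional complex Hilbert space and let $\mathcal{L}$ be a highly symmetric line system in $\mathcal{H}$. Then there exists a finite subgroup $G\leq \mathrm{Sym}(\mathcal{L})\leq \mathrm{PGL}(\mathcal{H})$ such that: (1) $G$ is irreducible (there is no nontrivial proper projective subspace of $\mathbf{P}(\mathcal{H})$ invariant under all elements of $G$); (2) $G$ acts transitively on the lines of $\mathcal{L}$; (3) for every line $l\in\mathcal{L}$, the stabilizer $G_l=\{g\in G: gl=l\}$ does not fix linewise any subspace properly containing $l$, i.e. there is no subspace $W\supsetneq l$ of $\mathcal{H}$ such that $gm=m$ for every $g\in G_l$ and every line $m\subseteq W$.
   Context: $\mathrm{PGL}(\mathcal{H})=\mathrm{GL}(\mathcal{H})/Z(\mathrm{GL}(\mathcal{H}))$ acts on the projective space $\mathbf{P}(\mathcal{H})$ of lines (1-dimensional subspaces). A line system is a finite sequence $\mathcal{L}=(l_j)_{j\in S}$ of lines in $\mathcal{H}$; it is assumed to span $\mathcal{H}$. Its symmetry group $\mathrm{Sym}(\mathcal{L})$ is the set of all $M\in\mathrm{PGL}(\mathcal{H})$ that permute the lines of $\mathcal{L}$. The stabilizer of a line $l$ in a group $K\le\mathrm{PGL}(\mathcal{H})$ is $K_l=\{h\in K: hl=l\}$. A line system $\mathcal{L}$ of distinct lines is highly symmetric if: (i) $\mathrm{Sym}(\mathcal{L})$ is irreducible (no nontrivial proper invariant projective subspace) and acts transitively on the lines of $\mathcal{L}$; (ii) (automatic for lines) the stabilizer $H_l$ of $l$ in $\mathrm{Sym}(\mathcal{L})$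 acts irreducibly on $l$; (iii) for each $l\in\mathcal{L}$ there is a neighbourhood of $l$ in $\mathbf{P}(\mathcal{H})$ containing no other line $m\neq l$ with $hm=m$ for all $h\in H_l$. *)

theory Defs
  imports "HOL-Analysis.Analysis" "HOL-Algebra.Group"
begin

text \<open>The finite-dimensional complex Hilbert space is modelled as complex^'n
  (with 'n a finite type); complex-linear notions use the library interpretation vec
  of vector_space with scalar multiplication (*s).\<close>

type_synonym 'n vecC = "complex ^ 'n"
type_synonym 'n matC = "complex ^ 'n ^ 'n"

definition is_line :: "'n::finite vecC set \<Rightarrow> bool" where
  "is_line l \<longleftrightarrow> (\<exists>v. v \<noteq> 0 \<and> l = range (\<lambda>c. c *s v))"

lemma is_line_eq:
  assumes "is_line l" "x \<in> l" "x \<noteq> 0"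
  shows "l = range (\<lambda>c. c *s x)"
proof -
  obtain v where v: "v \<noteq> 0" "l = range (\<lambda>c. c *s v)" using assms(1) is_line_def by blast
  then obtain a where a: "x = a *s v" using assms(2) by blast
  with assms(3) have a0: "a \<noteq> 0" by auto
  show ?thesis
  proof
    show "l \<subseteq> range (\<lambda>c. c *s x)"
    proof
      fix y assume "y \<in> l"
      then obtain c where "y = c *s v" using v by blast
      then have "y = (c / a) *s x" using a a0 by (simp add: vector_smult_assoc)
      then show "y \<in> range (\<lambda>c. c *s x)" by blast
    qed
    show "range (\<lambda>c. c *s x) \<subseteq> l"
      using a v by (auto simp: vector_smult_assoc)
  qed
qed

text \<open>Topology of the projective space P(H): quotient topology from H - {0}.\<close>
definition proj_open :: "'n::finite vecC set set \<Rightarrow> bool" where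
  "proj_open U \<longleftrightarrow> (\<forall>l\<in>U. is_line l) \<and> open (\<Union>U - {0})"

lemma istopology_proj_open: "istopology (proj_open :: 'n::finite vecC set set \<Rightarrow> bool)"
  unfolding istopology_def
proof (intro conjI allI impI)
  fix S T :: "'n vecC set set"
  assume S: "proj_open S" and T: "proj_open T"
  have "\<Union>(S \<inter> T) - {0} = (\<Union>S - {0}) \<inter> (\<Union>T - {0})"
  proof
    show "(\<Union>S - {0}) \<inter> (\<Union>T - {0}) \<subseteq> \<Union>(S \<inter> T) - {0}"
    proof
      fix x assume "x \<in> (\<Union>S - {0}) \<inter> (\<Union>T - {0})"
      then obtain l1 l2 where "l1 \<in> S" "l2 \<in> T" "x \<in> l1" "x \<in> l2" "x \<noteq> 0" by blast
      moreover have "l1 = l2"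
        using calculation S T is_line_eq unfolding proj_open_def by metis
      ultimately show "x \<in> \<Union>(S \<inter> T) - {0}" by blast
    qed
  qed blast
  then show "proj_open (S \<inter> T)" using S T unfolding proj_open_def by auto
next
  fix K :: "'n vecC set set set"
  assume K: "\<forall>k\<in>K. proj_open k"
  have "\<Union>(\<Union>K) - {0} = (\<Union>k\<in>K. \<Union>k - {0})" by blast
  moreover have "open (\<Union>k\<in>K. \<Union>k - {0})" using K unfolding proj_open_def by (intro open_UN) blast
  ultimately show "proj_open (\<Union>K)" using K unfolding proj_open_def by (metis Union_iff)
qed

definition proj_top :: "'n::finite vecC set topology" where
  "proj_top = topology proj_open"

definition pgl_class :: "'n::finite matC \<Rightarrow> 'n matC set" where
  "pgl_class M = {mat c ** M | c. c \<noteq> 0}"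

definition PGL :: "'n::finite matC set set" where
  "PGL = {pgl_class M | M. invertible M}"

definition pgl_rep :: "'n::finite matC set \<Rightarrow> 'n matC" where
  "pgl_rep g = (SOME A. A \<in> g)"

definition PGL_group :: "'n::finite matC set monoid" where
  "PGL_group = \<lparr>carrier = PGL,
     mult = (\<lambda>g h. pgl_class (pgl_rep g ** pgl_rep h)),
     one = pgl_class (mat 1)\<rparr>"

definition pgl_apply :: "'n::finite matC set \<Rightarrow> 'n vecC set \<Rightarrow> 'n vecC set" where
  "pgl_apply g S = (\<lambda>x. pgl_rep g *v x) ` S"

definition Sym :: "'n::finite vecC set set \<Rightarrow> 'n matC set set" where
  "Sym L = {g \<in> PGL. pgl_apply g ` L = L}"

definition stab :: "'n::finite matC set set \<Rightarrow> 'n vecC set \<Rightarrow> 'n matC set set" where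
  "stab K l = {h \<in> K. pgl_apply h l = l}"

definition proj_irreducible :: "'n::finite matC set set \<Rightarrow> bool" where
  "proj_irreducible K \<longleftrightarrow>
     \<not> (\<exists>W. vec.subspace W \<and> W \<noteq> {0} \<and> W \<noteq> UNIV \<and> (\<forall>g\<in>K. pgl_apply g W = W))"

definition transitive_on :: "'n::finite matC set set \<Rightarrow> 'n vecC set set \<Rightarrow> bool" where
  "transitive_on K L \<longleftrightarrow> (\<forall>l\<in>L. \<forall>m\<in>L. \<exists>g\<in>K. pgl_apply g l = m)"

definition line_system :: "'n::finite vecC set set \<Rightarrow> bool" where
  "line_system L \<longleftrightarrow> finite L \<and> (\<forall>l\<in>L. is_line l) \<and> vec.span (\<Union>L) = UNIV"

definition highly_symmetric :: "'n::finite vecC set set \<Rightarrow> bool" where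
  "highly_symmetric L \<longleftrightarrow> line_system L
     \<and> proj_irreducible (Sym L) \<and> transitive_on (Sym L) L
     \<and> (\<forall>l\<in>L. \<exists>N. openin proj_top N \<and> l \<in> N \<and>
            (\<forall>m\<in>N. is_line m \<and> m \<noteq> l \<longrightarrow> \<not> (\<forall>h\<in>stab (Sym L) l. pgl_apply h m = m)))"

end

theory Submission
  imports Defs
begin

lemma mat_mulv: "(mat c :: 'n::finite matC) *v x = c *s x"
proof -
  have "(\<Sum>j\<in>UNIV. (mat c :: 'n matC) $ i $ j * x $ j) = c * x $ i" for i
  proof -
    have "(\<Sum>j\<in>UNIV. (mat c :: 'n matC) $ i $ j * x $ j) = (\<Sum>j\<in>UNIV. if j = i then c * x $ j else 0)"
      by (rule sum.cong) (auto simp: mat_def)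
    also have "\<dots> = c * x $ i" by simp
    finally show ?thesis .
  qed
  then show ?thesis by (simp add: vec_eq_iff matrix_vector_mult_def)
qed

lemma mat_mat: "(mat a :: 'n::finite matC) ** mat b = mat (a*b)"
  by (simp add: matrix_eq mat_mulv flip: matrix_vector_mul_assoc)

lemma mat_comm: "(A :: 'n::finite matC) ** mat c = mat c ** A"
  unfolding matrix_eq
  by (simp add: mat_mulv flip: matrix_vector_mul_assoc) (simp add: vec.scale)

lemma mat_mulv2: "((mat c :: 'n::finite matC) ** A) *v x = c *s (A *v x)"
  by (simp add: mat_mulv flip: matrix_vector_mul_assoc)

definition minv :: "'n::finite matC \<Rightarrow> 'n matC" where
  "minv A = (SOME B. A ** B = mat 1 \<and> B ** A = mat 1)"

lemma minv: assumes "invertible A" shows "A ** minv A = mat 1" "minv A ** A = mat 1"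
proof -
  have "\<exists>B. A ** B = mat 1 \<and> B ** A = mat 1" using assms invertible_def by blast
  then have "A ** minv A = mat 1 \<and> minv A ** A = mat 1" unfolding minv_def by (rule someI_ex)
  then show "A ** minv A = mat 1" "minv A ** A = mat 1" by auto
qed

lemma minv_inv: "invertible A \<Longrightarrow> invertible (minv A)"
  using minv invertible_def by blast

lemma minv_v1: "invertible A \<Longrightarrow> A *v (minv A *v x) = x"
  by (simp add: matrix_vector_mul_assoc minv)

lemma minv_v2: "invertible A \<Longrightarrow> minv A *v (A *v x) = x"
  by (simp add: matrix_vector_mul_assoc minv)

lemma inv_inj: fixes A :: "'n::finite matC" assumes "invertible A" "A *v x = A *v y" shows "x = y"
proof -
  have "minv A *v (A *v x) = minv A *v (A *v y)" using assms(2) by simp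
  then show ?thesis by (simp add: minv_v2[OF assms(1)])
qed

lemma inv_mat: "c \<noteq> 0 \<Longrightarrow> invertible (mat c :: 'n::finite matC)"
  unfolding invertible_def by (rule exI[of _ "mat (inverse c)"]) (simp add: mat_mat)

lemma inv_matmul: "c \<noteq> 0 \<Longrightarrow> invertible A \<Longrightarrow> invertible (mat c ** (A :: 'n::finite matC))"
  by (simp add: inv_mat invertible_mult)

lemma lin_mul: "Vector_Spaces.linear (*s) (*s) (\<lambda>x. (A::'n::finite matC) *v x)"
  by (rule matrix_vector_mul_linear_gen)

lemma smult_eq_cancel: "(a::complex) *s (v::'n::finite vecC) = b *s v \<Longrightarrow> v \<noteq> 0 \<Longrightarrow> a = b"
  by (simp add: vector_mul_rcancel)

section \<open>Lines\<close>

definition vv :: "'n::finite vecC set \<Rightarrow> 'n vecC" where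
  "vv l = (SOME x. x \<in> l \<and> x \<noteq> 0)"

lemma vv: assumes "is_line l" shows "vv l \<in> l" "vv l \<noteq> 0" "l = range (\<lambda>c. c *s vv l)"
proof -
  obtain v where v: "v \<noteq> 0" "l = range (\<lambda>c. c *s v)" using assms is_line_def by blast
  then have "v \<in> l" by (simp add: range_eqI[of _ _ 1])
  then have "\<exists>x. x \<in> l \<and> x \<noteq> 0" using v by blast
  then have "vv l \<in> l \<and> vv l \<noteq> 0" unfolding vv_def by (rule someI_ex)
  then show "vv l \<in> l" "vv l \<noteq> 0" "l = range (\<lambda>c. c *s vv l)"
    using is_line_eq[OF assms] by auto
qed

lemma line_mem: "is_line l \<Longrightarrow> x \<in> l \<longleftrightarrow> (\<exists>c. x = c *s vv l)"
  using vv(3) by blast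

lemma line_of: "v \<noteq> 0 \<Longrightarrow> is_line (range (\<lambda>c. c *s v))"
  unfolding is_line_def by blast

definition Lap :: "'n::finite matC \<Rightarrow> 'n vecC set \<Rightarrow> 'n vecC set" where
  "Lap A S = (\<lambda>x. A *v x) ` S"

lemma Lap_mul: "Lap (A ** B) S = Lap A (Lap B S)"
  unfolding Lap_def by (auto simp flip: matrix_vector_mul_assoc)

lemma Lap_one: "Lap (mat 1) S = S"
  unfolding Lap_def by simp

lemma Lap_line: assumes "is_line l" "invertible A"
  shows "Lap A l = range (\<lambda>c. c *s (A *v vv l))" "is_line (Lap A l)"
proof -
  show 1: "Lap A l = range (\<lambda>c. c *s (A *v vv l))"
    unfolding Lap_def by (subst vv(3)[OF assms(1)]) (simp only: image_image vec.scale)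
  have "A *v vv l \<noteq> 0" using vv(2)[OF assms(1)] inv_inj[OF assms(2), of "vv l" 0] by auto
  then show "is_line (Lap A l)" using 1 line_of by simp
qed

definition cone :: "'n::finite vecC set \<Rightarrow> bool" where
  "cone S \<longleftrightarrow> (\<forall>c x. c \<noteq> 0 \<longrightarrow> x \<in> S \<longrightarrow> c *s x \<in> S)"

lemma line_smult: assumes "is_line l" "x \<in> l" shows "c *s x \<in> l"
proof -
  obtain d where "x = d *s vv l" using line_mem[OF assms(1)] assms(2) by blast
  then have "c *s x = (c*d) *s vv l" by (simp add: vector_smult_assoc)
  then show ?thesis using line_mem[OF assms(1)] by blast
qed

lemma cone_line: "is_line l \<Longrightarrow> cone l"
  unfolding cone_def using line_smult by blast

lemma cone_subspace: "vec.subspace W \<Longrightarrow> cone W"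
  unfolding cone_def by (simp add: vec.subspace_scale)

lemma cone_scale: assumes "cone S" "c \<noteq> 0" shows "(\<lambda>x. c *s x) ` S = S"
proof
  show "(\<lambda>x. c *s x) ` S \<subseteq> S" using assms unfolding cone_def by auto
  show "S \<subseteq> (\<lambda>x. c *s x) ` S"
  proof
    fix x assume "x \<in> S"
    then have "inverse c *s x \<in> S" using assms unfolding cone_def by auto
    moreover have "x = c *s (inverse c *s x)" using assms(2) by (simp add: vector_smult_assoc)
    ultimately show "x \<in> (\<lambda>x. c *s x) ` S" by blast
  qed
qed

lemma Lap_scale: assumes "cone S" "c \<noteq> 0" shows "Lap (mat c ** A) S = Lap A S"
proof -
  have "mat c ** A = A ** mat c" by (simp add: mat_comm)
  then have "Lap (mat c ** A) S = Lap A (Lap (mat c) S)" by (simp add: Lap_mul)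
  also have "Lap (mat c) S = S" unfolding Lap_def using cone_scale[OF assms] by (simp add: mat_mulv)
  finally show ?thesis .
qed

section \<open>PGL\<close>

lemma pgl_class_mem: "M \<in> pgl_class M"
  unfolding pgl_class_def by (rule CollectI, rule exI[of _ 1]) simp

lemma pgl_class_scale: assumes "c \<noteq> 0" shows "pgl_class (mat c ** M) = pgl_class M"
proof -
  have h1: "mat a ** (mat c ** M) = mat (a*c) ** M" for a by (simp add: mat_mat matrix_mul_assoc)
  have h2: "mat a ** M = mat (a / c) ** (mat c ** M)" for a
    using assms by (simp add: mat_mat matrix_mul_assoc)
  show ?thesis
  proof
    show "pgl_class (mat c ** M) \<subseteq> pgl_class M"
    proof
      fix X assume "X \<in> pgl_class (mat c ** M)"
      then obtain a where a: "a \<noteq> 0" "X = mat a ** (mat c ** M)" unfolding pgl_class_def by blast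
      have "X = mat (a*c) ** M" using a(2) h1[of a] by (rule trans)
      moreover have "a * c \<noteq> 0" using a(1) assms by simp
      ultimately show "X \<in> pgl_class M" unfolding pgl_class_def by blast
    qed
    show "pgl_class M \<subseteq> pgl_class (mat c ** M)"
    proof
      fix X assume "X \<in> pgl_class M"
      then obtain a where a: "a \<noteq> 0" "X = mat a ** M" unfolding pgl_class_def by blast
      have "X = mat (a/c) ** (mat c ** M)" using a(2) h2[of a] by (rule trans)
      moreover have "a / c \<noteq> 0" using a(1) assms by simp
      ultimately show "X \<in> pgl_class (mat c ** M)" unfolding pgl_class_def by blast
    qed
  qed
qed

lemma pgl_rep: "\<exists>c. c \<noteq> 0 \<and> pgl_rep (pgl_class M) = mat c ** M"
proof -
  have "pgl_rep (pgl_class M) \<in> pgl_class M"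
    unfolding pgl_rep_def by (rule someI[of _ M]) (rule pgl_class_mem)
  then show ?thesis unfolding pgl_class_def by auto
qed

lemma pgl_class_rep: "pgl_class (pgl_rep (pgl_class M)) = pgl_class M"
proof -
  obtain c where c: "c \<noteq> 0" "pgl_rep (pgl_class M) = mat c ** M" using pgl_rep by blast
  show ?thesis unfolding c(2) by (rule pgl_class_scale[OF c(1)])
qed

lemma pgl_apply_class: assumes "cone S" shows "pgl_apply (pgl_class M) S = Lap M S"
proof -
  obtain c where c: "c \<noteq> 0" "pgl_rep (pgl_class M) = mat c ** M" using pgl_rep by blast
  have "pgl_apply (pgl_class M) S = Lap (mat c ** M) S" unfolding pgl_apply_def Lap_def c(2) ..
  also have "\<dots> = Lap M S" by (rule Lap_scale[OF assms c(1)])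
  finally show ?thesis .
qed

lemma mult_class: "pgl_class (pgl_rep (pgl_class A) ** pgl_rep (pgl_class B)) = pgl_class (A ** B)"
proof -
  obtain a where a: "a \<noteq> 0" "pgl_rep (pgl_class A) = mat a ** A" using pgl_rep by blast
  obtain b where b: "b \<noteq> 0" "pgl_rep (pgl_class B) = mat b ** B" using pgl_rep by blast
  have "(mat a ** A) ** (mat b ** B) = mat a ** ((A ** mat b) ** B)"
    by (simp only: matrix_mul_assoc)
  also have "\<dots> = mat a ** ((mat b ** A) ** B)" by (simp only: mat_comm[of A b])
  also have "\<dots> = mat (a*b) ** (A ** B)" by (simp only: matrix_mul_assoc mat_mat)
  finally have e: "(mat a ** A) ** (mat b ** B) = mat (a*b) ** (A ** B)" .
  have ab: "a * b \<noteq> 0" using a(1) b(1) by simp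
  have eq: "pgl_rep (pgl_class A) ** pgl_rep (pgl_class B) = mat (a*b) ** (A ** B)"
    by (simp only: a(2) b(2) e)
  have "pgl_class (pgl_rep (pgl_class A) ** pgl_rep (pgl_class B)) = pgl_class (mat (a*b) ** (A ** B))"
    by (rule arg_cong[OF eq])
  also have "\<dots> = pgl_class (A ** B)" by (rule pgl_class_scale[OF ab])
  finally show ?thesis .
qed

lemma PGL_mult: "g \<otimes>\<^bsub>PGL_group\<^esub> h = pgl_class (pgl_rep g ** pgl_rep h)"
  by (simp add: PGL_group_def)

lemma PGL_carrier: "carrier PGL_group = PGL"
  by (simp add: PGL_group_def)

lemma PGL_one: "\<one>\<^bsub>PGL_group\<^esub> = pgl_class (mat 1)"
  by (simp add: PGL_group_def)

lemma PGL_mult_class: "pgl_class A \<otimes>\<^bsub>PGL_group\<^esub> pgl_class B = pgl_class (A ** B)"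
  by (simp only: PGL_mult mult_class)

lemma PGL_memI: "invertible A \<Longrightarrow> pgl_class A \<in> PGL"
  unfolding PGL_def by blast

lemma PGL_memE: assumes "g \<in> PGL" obtains A where "invertible A" "g = pgl_class A"
  using assms unfolding PGL_def by auto

lemma carrierE: "x \<in> carrier PGL_group \<Longrightarrow> \<exists>A. invertible A \<and> x = pgl_class A"
  unfolding PGL_carrier PGL_def by blast

lemma group_PGL: "group (PGL_group :: 'n::finite matC set monoid)"
proof (rule groupI)
  fix x y :: "'n matC set" assume x: "x \<in> carrier PGL_group" and y: "y \<in> carrier PGL_group"
  obtain A where A: "invertible A" "x = pgl_class A" using carrierE[OF x] by blast
  obtain B where B: "invertible B" "y = pgl_class B" using carrierE[OF y] by blast
  show "x \<otimes>\<^bsub>PGL_group\<^esub> y \<in> carrier PGL_group"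
    unfolding A(2) B(2) PGL_mult_class PGL_carrier by (rule PGL_memI) (rule invertible_mult[OF A(1) B(1)])
next
  show "\<one>\<^bsub>PGL_group\<^esub> \<in> carrier (PGL_group :: 'n matC set monoid)"
    unfolding PGL_one PGL_carrier by (rule PGL_memI) (rule inv_mat, simp)
next
  fix x y z :: "'n matC set"
  assume x: "x \<in> carrier PGL_group" and y: "y \<in> carrier PGL_group" and z: "z \<in> carrier PGL_group"
  obtain A where A: "x = pgl_class A" using carrierE[OF x] by blast
  obtain B where B: "y = pgl_class B" using carrierE[OF y] by blast
  obtain C where C: "z = pgl_class C" using carrierE[OF z] by blast
  show "x \<otimes>\<^bsub>PGL_group\<^esub> y \<otimes>\<^bsub>PGL_group\<^esub> z = x \<otimes>\<^bsub>PGL_group\<^esub> (y \<otimes>\<^bsub>PGL_group\<^esub> z)"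
    unfolding A B C by (simp only: PGL_mult_class matrix_mul_assoc)
next
  fix x :: "'n matC set" assume x: "x \<in> carrier PGL_group"
  obtain A where A: "x = pgl_class A" using carrierE[OF x] by blast
  show "\<one>\<^bsub>PGL_group\<^esub> \<otimes>\<^bsub>PGL_group\<^esub> x = x"
    unfolding A by (simp only: PGL_one PGL_mult_class matrix_mul_lid)
next
  fix x :: "'n matC set" assume x: "x \<in> carrier PGL_group"
  obtain A where A: "invertible A" "x = pgl_class A" using carrierE[OF x] by blast
  have 1: "pgl_class (minv A) \<in> carrier PGL_group"
    unfolding PGL_carrier by (rule PGL_memI) (rule minv_inv[OF A(1)])
  have 2: "pgl_class (minv A) \<otimes>\<^bsub>PGL_group\<^esub> x = \<one>\<^bsub>PGL_group\<^esub>"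
    unfolding A(2) PGL_mult_class PGL_one minv(2)[OF A(1)] ..
  show "\<exists>y\<in>carrier PGL_group. y \<otimes>\<^bsub>PGL_group\<^esub> x = \<one>\<^bsub>PGL_group\<^esub>"
    using 1 2 by (rule bexI[rotated])
qed

lemma PGL_inv: assumes A: "invertible A"
  shows "inv\<^bsub>PGL_group\<^esub> (pgl_class A) = pgl_class (minv A)"
proof (rule group.inv_equality[OF group_PGL])
  show "pgl_class (minv A) \<otimes>\<^bsub>PGL_group\<^esub> pgl_class A = \<one>\<^bsub>PGL_group\<^esub>"
    unfolding PGL_mult_class PGL_one minv(2)[OF A] ..
  show "pgl_class A \<in> carrier PGL_group"
    unfolding PGL_carrier by (rule PGL_memI[OF A])
  show "pgl_class (minv A) \<in> carrier PGL_group"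
    unfolding PGL_carrier by (rule PGL_memI[OF minv_inv[OF A]])
qed


lemma ex_root: assumes "(c::complex) \<noteq> 0" "n > 0" shows "\<exists>z. z ^ n = c"
proof -
  define c' where "c' = root n (norm c) * cis (Arg c / n)"
  have "bij_betw (\<lambda>z. c' * z) {z. z ^ n = 1} {z. z ^ n = c}"
    unfolding c'_def by (rule bij_betw_nth_root_unity[OF assms])
  then have "(\<lambda>z. c' * z) ` {z. z ^ n = 1} = {z. z ^ n = c}" by (simp add: bij_betw_def)
  moreover have "(1::complex) \<in> {z. z ^ n = 1}" by simp
  ultimately show ?thesis by blast
qed

section \<open>Line systems: the diagonal algebra\<close>

definition ev :: "'n::finite matC \<Rightarrow> 'n vecC set \<Rightarrow> complex" where
  "ev A l = (SOME c. A *v vv l = c *s vv l)"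

lemma ev_eqI: assumes "is_line l" "A *v vv l = c *s vv l" shows "ev A l = c"
proof -
  have "A *v vv l = ev A l *s vv l" unfolding ev_def using assms(2) by (rule someI)
  then have "ev A l *s vv l = c *s vv l" using assms(2) by (simp only:)
  then show ?thesis using smult_eq_cancel vv(2)[OF assms(1)] by blast
qed

lemma line_add: assumes "is_line l" "x \<in> l" "y \<in> l" shows "x + y \<in> l"
proof -
  obtain a where a: "x = a *s vv l" using line_mem[OF assms(1)] assms(2) by blast
  obtain b where b: "y = b *s vv l" using line_mem[OF assms(1)] assms(3) by blast
  have "x + y = (a + b) *s vv l" unfolding a b by (simp add: vector_sadd_rdistrib)
  then show ?thesis using line_mem[OF assms(1)] by blast
qed

lemma line_sub: assumes "is_line l" "x \<in> l" "y \<in> l" shows "x - y \<in> l"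
proof -
  obtain a where a: "x = a *s vv l" using line_mem[OF assms(1)] assms(2) by blast
  obtain b where b: "y = b *s vv l" using line_mem[OF assms(1)] assms(3) by blast
  have "x - y = (a - b) *s vv l" unfolding a b by (simp add: vec_eq_iff algebra_simps)
  then show ?thesis using line_mem[OF assms(1)] by blast
qed

lemma line_zero: "is_line l \<Longrightarrow> 0 \<in> l"
  using line_smult[of l "vv l" 0] vv(1)[of l] by simp

locale LS =
  fixes L :: "'n::finite vecC set set"
  assumes LS: "line_system L"
begin

lemma fin: "finite L" and lines: "l \<in> L \<Longrightarrow> is_line l" and spans: "vec.span (\<Union>L) = UNIV"
  using LS unfolding line_system_def by auto

lemma span_vv: "vec.span (vv ` L) = UNIV"
proof -
  have "\<Union>L \<subseteq> vec.span (vv ` L)"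
  proof
    fix x assume "x \<in> \<Union>L"
    then obtain l where l: "l \<in> L" "x \<in> l" by blast
    then obtain c where "x = c *s vv l" using line_mem lines by blast
    then show "x \<in> vec.span (vv ` L)" using l(1) by (simp add: vec.span_base vec.span_scale)
  qed
  then have "vec.span (\<Union>L) \<subseteq> vec.span (vv ` L)" by (rule vec.span_minimal) simp
  then show ?thesis using spans by auto
qed

lemma mext: fixes A B :: "'n matC" assumes "\<And>l. l \<in> L \<Longrightarrow> A *v vv l = B *v vv l" shows "A = B"
  unfolding matrix_eq
proof
  fix x
  show "A *v x = B *v x"
    using vec.linear_eq_on_span[OF lin_mul[of A] lin_mul[of B], of "vv ` L" x] assms span_vv by auto
qed

definition D :: "'n matC set" where
  "D = {A. \<forall>l\<in>L. \<exists>c. A *v vv l = c *s vv l}"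

lemma evD: assumes "A \<in> D" "l \<in> L" shows "A *v vv l = ev A l *s vv l"
proof -
  obtain c where c: "A *v vv l = c *s vv l" using assms unfolding D_def by blast
  then have "ev A l = c" using ev_eqI lines assms(2) by blast
  then show ?thesis using c by simp
qed

lemma evI: "l \<in> L \<Longrightarrow> A *v vv l = c *s vv l \<Longrightarrow> ev A l = c"
  using ev_eqI lines by blast

lemma D_mat: "mat c \<in> D" and ev_mat: "l \<in> L \<Longrightarrow> ev (mat c) l = c"
  by (auto simp: D_def mat_mulv intro: evI)

lemma D_add: "A \<in> D \<Longrightarrow> B \<in> D \<Longrightarrow> A + B \<in> D"
  and ev_add: "A \<in> D \<Longrightarrow> B \<in> D \<Longrightarrow> l \<in> L \<Longrightarrow> ev (A + B) l = ev A l + ev B l"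
proof -
  have *: "A \<in> D \<Longrightarrow> B \<in> D \<Longrightarrow> l \<in> L \<Longrightarrow> (A + B) *v vv l = (ev A l + ev B l) *s vv l" for l
    by (simp add: matrix_vector_mult_add_rdistrib evD vector_sadd_rdistrib)
  show "A \<in> D \<Longrightarrow> B \<in> D \<Longrightarrow> A + B \<in> D" using * unfolding D_def by blast
  show "A \<in> D \<Longrightarrow> B \<in> D \<Longrightarrow> l \<in> L \<Longrightarrow> ev (A + B) l = ev A l + ev B l" using * evI by blast
qed

lemma D_mul: "A \<in> D \<Longrightarrow> B \<in> D \<Longrightarrow> A ** B \<in> D"
  and ev_mul: "A \<in> D \<Longrightarrow> B \<in> D \<Longrightarrow> l \<in> L \<Longrightarrow> ev (A ** B) l = ev A l * ev B l"
proof -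
  have *: "A \<in> D \<Longrightarrow> B \<in> D \<Longrightarrow> l \<in> L \<Longrightarrow> (A ** B) *v vv l = (ev A l * ev B l) *s vv l" for l
    by (simp add: evD vec.scale mult.commute flip: matrix_vector_mul_assoc)
  show "A \<in> D \<Longrightarrow> B \<in> D \<Longrightarrow> A ** B \<in> D" using * unfolding D_def by blast
  show "A \<in> D \<Longrightarrow> B \<in> D \<Longrightarrow> l \<in> L \<Longrightarrow> ev (A ** B) l = ev A l * ev B l" using * evI by blast
qed

lemma D_smul: "A \<in> D \<Longrightarrow> mat k ** A \<in> D"
  and ev_smul: "A \<in> D \<Longrightarrow> l \<in> L \<Longrightarrow> ev (mat k ** A) l = k * ev A l"
  using D_mul[OF D_mat] ev_mul[OF D_mat] ev_mat by auto

lemma D_diff: "A \<in> D \<Longrightarrow> B \<in> D \<Longrightarrow> A - B \<in> D"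
  and ev_diff: "A \<in> D \<Longrightarrow> B \<in> D \<Longrightarrow> l \<in> L \<Longrightarrow> ev (A - B) l = ev A l - ev B l"
proof -
  have *: "A \<in> D \<Longrightarrow> B \<in> D \<Longrightarrow> l \<in> L \<Longrightarrow> (A - B) *v vv l = (ev A l - ev B l) *s vv l" for l
    by (simp add: matrix_vector_mult_diff_rdistrib evD vector_ssub_ldistrib scaleR_left_diff_distrib
        algebra_simps)
  show "A \<in> D \<Longrightarrow> B \<in> D \<Longrightarrow> A - B \<in> D" using * unfolding D_def by blast
  show "A \<in> D \<Longrightarrow> B \<in> D \<Longrightarrow> l \<in> L \<Longrightarrow> ev (A - B) l = ev A l - ev B l" using * evI by blast
qed

lemma D_ext: "A \<in> D \<Longrightarrow> B \<in> D \<Longrightarrow> (\<And>l. l \<in> L \<Longrightarrow> ev A l = ev B l) \<Longrightarrow> A = B"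
  by (rule mext) (simp add: evD)

definition eqv :: "'n vecC set \<Rightarrow> 'n vecC set \<Rightarrow> bool" where
  "eqv l l' \<longleftrightarrow> (\<forall>d\<in>D. ev d l = ev d l')"

lemma eqv_refl: "eqv l l" and eqv_sym: "eqv l l' \<Longrightarrow> eqv l' l"
  and eqv_trans: "eqv l l' \<Longrightarrow> eqv l' l'' \<Longrightarrow> eqv l l''"
  unfolding eqv_def by auto

definition cls :: "'n vecC set \<Rightarrow> 'n vecC set set" where
  "cls l = {l'\<in>L. eqv l l'}"

lemma cls_fin: "finite (cls l)" using fin unfolding cls_def by simp

lemma cls_self: "l \<in> L \<Longrightarrow> l \<in> cls l" unfolding cls_def by (simp add: eqv_refl)

lemma cls_eq: "l' \<in> cls l \<Longrightarrow> cls l' = cls l"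
  unfolding cls_def using eqv_sym eqv_trans by blast

lemma cls_card: "l \<in> L \<Longrightarrow> card (cls l) \<ge> 1 \<and> card (cls l) \<le> card L"
proof -
  assume "l \<in> L"
  then have "cls l \<noteq> {}" using cls_self by blast
  then have "card (cls l) \<ge> 1" using cls_fin by (simp add: Suc_leI card_gt_0_iff)
  moreover have "card (cls l) \<le> card L" using fin by (rule card_mono) (auto simp: cls_def)
  ultimately show ?thesis by simp
qed

lemma sep: assumes "l0 \<in> L" "l1 \<in> L" "\<not> eqv l0 l1"
  shows "\<exists>Q\<in>D. (\<forall>l\<in>L. eqv l0 l \<longrightarrow> ev Q l = 1) \<and> ev Q l1 = 0"
proof -
  obtain d where d: "d \<in> D" "ev d l0 \<noteq> ev d l1" using assms(3) unfolding eqv_def by blast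
  define Q where "Q = mat (1 / (ev d l0 - ev d l1)) ** (d - mat (ev d l1))"
  have QD: "Q \<in> D" unfolding Q_def by (intro D_smul D_diff d D_mat)
  have evQ: "ev Q l = (ev d l - ev d l1) / (ev d l0 - ev d l1)" if "l \<in> L" for l
    unfolding Q_def using that by (simp add: ev_smul ev_diff d D_diff D_mat ev_mat)
  show ?thesis
  proof (intro bexI[OF _ QD] conjI ballI impI)
    fix l assume "l \<in> L" "eqv l0 l"
    then have "ev d l = ev d l0" using d(1) unfolding eqv_def by auto
    then show "ev Q l = 1" using evQ[OF \<open>l \<in> L\<close>] d(2) by simp
  next
    show "ev Q l1 = 0" using evQ[OF assms(2)] by simp
  qed
qed

lemma proj_ex: assumes "l0 \<in> L"
  shows "\<exists>P\<in>D. \<forall>l\<in>L. ev P l = (if eqv l0 l then 1 else 0)"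
proof -
  have "finite X \<Longrightarrow> X \<subseteq> L \<Longrightarrow> \<exists>P\<in>D. (\<forall>l\<in>L. eqv l0 l \<longrightarrow> ev P l = 1) \<and> (\<forall>l\<in>X. \<not> eqv l0 l \<longrightarrow> ev P l = 0)"
    for X
  proof (induction X rule: finite_subset_induct')
    case empty
    show ?case by (rule bexI[of _ "mat 1"]) (auto simp: D_mat ev_mat)
  next
    case (insert x X)
    then obtain P where P: "P \<in> D" "\<forall>l\<in>L. eqv l0 l \<longrightarrow> ev P l = 1" "\<forall>l\<in>X. \<not> eqv l0 l \<longrightarrow> ev P l = 0"
      by blast
    show ?case
    proof (cases "eqv l0 x")
      case True
      then show ?thesis using P by blast
    next
      case False
      obtain Q where Q: "Q \<in> D" "\<forall>l\<in>L. eqv l0 l \<longrightarrow> ev Q l = 1" "ev Q x = 0"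
        using sep[OF assms \<open>x \<in> L\<close> False] by blast
      show ?thesis
        using P Q \<open>x \<in> L\<close> \<open>X \<subseteq> L\<close>
        by (intro bexI[of _ "Q ** P"]) (auto simp: ev_mul D_mul)
    qed
  qed
  from this[OF fin order_refl] obtain P where
    P: "P \<in> D" "\<forall>l\<in>L. eqv l0 l \<longrightarrow> ev P l = 1" "\<forall>l\<in>L. \<not> eqv l0 l \<longrightarrow> ev P l = 0" by blast
  show ?thesis by (rule bexI[OF _ P(1)]) (use P in auto)
qed

definition Pr :: "'n vecC set \<Rightarrow> 'n matC" where
  "Pr l0 = (SOME P. P \<in> D \<and> (\<forall>l\<in>L. ev P l = (if eqv l0 l then 1 else 0)))"

lemma Pr: assumes "l0 \<in> L" shows "Pr l0 \<in> D" "l \<in> L \<Longrightarrow> ev (Pr l0) l = (if eqv l0 l then 1 else 0)"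
proof -
  have "Pr l0 \<in> D \<and> (\<forall>l\<in>L. ev (Pr l0) l = (if eqv l0 l then 1 else 0))"
  proof -
    have "\<exists>P. P \<in> D \<and> (\<forall>l\<in>L. ev P l = (if eqv l0 l then 1 else 0))" using proj_ex[OF assms] by blast
    then show ?thesis unfolding Pr_def by (rule someI_ex)
  qed
  then show "Pr l0 \<in> D" "l \<in> L \<Longrightarrow> ev (Pr l0) l = (if eqv l0 l then 1 else 0)" by auto
qed

lemma realize:
  assumes G0: "Good (mat 0)" and Gadd: "\<And>A B. Good A \<Longrightarrow> Good B \<Longrightarrow> Good (A + B)"
    and Gsm: "\<And>A k. Good A \<Longrightarrow> Good (mat k ** A)" and GP: "\<And>l. l \<in> L \<Longrightarrow> Good (Pr l)"
    and psi: "\<And>l l'. l \<in> L \<Longrightarrow> l' \<in> L \<Longrightarrow> eqv l l' \<Longrightarrow> psi l = psi l'"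
  shows "\<exists>d\<in>D. Good d \<and> (\<forall>l\<in>L. ev d l = psi l)"
proof -
  have "finite X \<Longrightarrow> X \<subseteq> L \<Longrightarrow> \<exists>d\<in>D. Good d \<and> (\<forall>l\<in>X. ev d l = psi l)" for X
  proof (induction X rule: finite_subset_induct')
    case empty
    show ?case using G0 D_mat by blast
  next
    case (insert x X)
    then obtain d where d: "d \<in> D" "Good d" "\<forall>l\<in>X. ev d l = psi l" by blast
    define d' where "d' = d + mat (psi x - ev d x) ** Pr x"
    have d'D: "d' \<in> D" unfolding d'_def by (intro D_add d D_smul Pr \<open>x \<in> L\<close>)
    have evd': "ev d' l = ev d l + (psi x - ev d x) * (if eqv x l then 1 else 0)" if "l \<in> L" for l
      unfolding d'_def using that \<open>x \<in> L\<close> by (simp add: ev_add ev_smul d D_smul Pr)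
    show ?case
    proof (intro bexI[OF _ d'D] conjI ballI)
      show "Good d'" unfolding d'_def by (intro Gadd Gsm GP d \<open>x \<in> L\<close>)
    next
      fix l assume l: "l \<in> insert x X"
      then have lL: "l \<in> L" using insert by auto
      show "ev d' l = psi l"
      proof (cases "eqv x l")
        case True
        then have "ev d l = ev d x" using d(1) unfolding eqv_def by auto
        moreover have "psi l = psi x" using psi[OF \<open>x \<in> L\<close> lL True] by simp
        ultimately show ?thesis using evd'[OF lL] True by simp
      next
        case False
        then have "l \<in> X" using l eqv_refl by auto
        then show ?thesis using evd'[OF lL] False d(3) by simp
      qed
    qed
  qed
  from this[OF fin order_refl] show ?thesis .
qed

lemma realize_simple:
  assumes "\<And>l l'. l \<in> L \<Longrightarrow> l' \<in> L \<Longrightarrow> eqv l l' \<Longrightarrow> psi l = psi l'"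
  shows "\<exists>d\<in>D. \<forall>l\<in>L. ev d l = psi l"
  using realize[of "\<lambda>_. True" psi] assms by auto

lemma D_good:
  assumes G0: "Good (mat 0)" and Gadd: "\<And>A B. Good A \<Longrightarrow> Good B \<Longrightarrow> Good (A + B)"
    and Gsm: "\<And>A k. Good A \<Longrightarrow> Good (mat k ** A)" and GP: "\<And>l. l \<in> L \<Longrightarrow> Good (Pr l)"
    and e: "e \<in> D"
  shows "Good e"
proof -
  have "\<exists>d\<in>D. Good d \<and> (\<forall>l\<in>L. ev d l = ev e l)"
    by (rule realize[OF G0 Gadd Gsm GP]) (use e in \<open>auto simp: eqv_def\<close>)
  then obtain d where "d \<in> D" "Good d" "\<forall>l\<in>L. ev d l = ev e l" by blast
  moreover have "d = e" using calculation e D_ext by blast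
  ultimately show ?thesis by simp
qed

end


lemma line_common: assumes "is_line l" "is_line m" "x \<in> l" "x \<in> m" "x \<noteq> 0" shows "l = m"
  using is_line_eq[OF assms(1,3,5)] is_line_eq[OF assms(2,4,5)] by simp

lemma Lap_minv_Lap: "invertible A \<Longrightarrow> Lap (minv A) (Lap A S) = S"
  by (simp add: Lap_mul[symmetric] minv Lap_one)

lemma Lap_Lap_minv: "invertible A \<Longrightarrow> Lap A (Lap (minv A) S) = S"
  by (simp add: Lap_mul[symmetric] minv Lap_one)

lemma Lap_mem: "x \<in> S \<Longrightarrow> A *v x \<in> Lap A S"
  unfolding Lap_def by blast

context LS
begin

definition Sh :: "'n matC set" where
  "Sh = {A. invertible A \<and> Lap A ` L = L}"

lemma Sh_inv: "A \<in> Sh \<Longrightarrow> invertible A" unfolding Sh_def by blast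

lemma Sh_line: "A \<in> Sh \<Longrightarrow> l \<in> L \<Longrightarrow> Lap A l \<in> L" unfolding Sh_def by blast

lemma Sh_surj: "A \<in> Sh \<Longrightarrow> m \<in> L \<Longrightarrow> \<exists>l\<in>L. m = Lap A l" unfolding Sh_def by blast

definition cf :: "'n matC \<Rightarrow> 'n vecC set \<Rightarrow> complex" where
  "cf A l = (SOME c. A *v vv l = c *s vv (Lap A l))"

lemma cf: assumes "A \<in> Sh" "l \<in> L" shows "A *v vv l = cf A l *s vv (Lap A l)"
proof -
  have m: "is_line (Lap A l)" using Sh_line[OF assms] lines by blast
  have "A *v vv l \<in> Lap A l" using vv(1)[OF lines[OF assms(2)]] by (rule Lap_mem)
  then have "\<exists>c. A *v vv l = c *s vv (Lap A l)" using line_mem[OF m] by blast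
  then show ?thesis unfolding cf_def by (rule someI_ex)
qed

lemma cfI: assumes "A \<in> Sh" "l \<in> L" "A *v vv l = c *s vv (Lap A l)" shows "cf A l = c"
proof -
  have m: "is_line (Lap A l)" using Sh_line[OF assms(1,2)] lines by blast
  have "cf A l *s vv (Lap A l) = c *s vv (Lap A l)" using cf[OF assms(1,2)] assms(3) by (simp only:)
  then show ?thesis using smult_eq_cancel vv(2)[OF m] by blast
qed

lemma cf_nz: assumes "A \<in> Sh" "l \<in> L" shows "cf A l \<noteq> 0"
proof
  assume "cf A l = 0"
  then have "A *v vv l = A *v 0" using cf[OF assms] by simp
  then have "vv l = 0" using inv_inj[OF Sh_inv[OF assms(1)]] by blast
  then show False using vv(2)[OF lines[OF assms(2)]] by simp
qed

lemma Lap_mul_fun: "Lap (A ** B) = Lap A \<circ> Lap B"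
  by (rule HOL.ext) (simp add: Lap_mul)

lemma Sh_one: "mat 1 \<in> Sh"
  unfolding Sh_def by (simp add: Lap_one inv_mat)

lemma Sh_mul: assumes "A \<in> Sh" "B \<in> Sh" shows "A ** B \<in> Sh"
proof -
  have "Lap (A ** B) ` L = Lap A ` (Lap B ` L)" unfolding Lap_mul_fun image_comp ..
  also have "\<dots> = L"
  proof -
    have a: "Lap A ` L = L" and b: "Lap B ` L = L" using assms unfolding Sh_def by auto
    show ?thesis by (simp only: a b)
  qed
  finally have "Lap (A ** B) ` L = L" .
  moreover have "invertible (A ** B)" using invertible_mult Sh_inv assms by blast
  ultimately show ?thesis unfolding Sh_def by blast
qed

lemma Sh_minv: assumes "A \<in> Sh" shows "minv A \<in> Sh"
proof -
  have iA: "invertible A" using Sh_inv[OF assms] .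
  have "Lap (minv A) ` L = L"
  proof
    show "Lap (minv A) ` L \<subseteq> L"
    proof
      fix x assume "x \<in> Lap (minv A) ` L"
      then obtain m where m: "m \<in> L" "x = Lap (minv A) m" by blast
      obtain l where l: "l \<in> L" "m = Lap A l" using Sh_surj[OF assms m(1)] by blast
      show "x \<in> L" using m(2) l Lap_minv_Lap[OF iA] by simp
    qed
    show "L \<subseteq> Lap (minv A) ` L"
    proof
      fix l assume l: "l \<in> L"
      have "l = Lap (minv A) (Lap A l)" using Lap_minv_Lap[OF iA] by simp
      then show "l \<in> Lap (minv A) ` L" using Sh_line[OF assms l] by blast
    qed
  qed
  then show ?thesis using minv_inv[OF iA] unfolding Sh_def by blast
qed

lemma Lap_inj: assumes "A \<in> Sh" shows "inj_on (Lap A) S"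
proof
  fix x y assume "Lap A x = Lap A y"
  then have "Lap (minv A) (Lap A x) = Lap (minv A) (Lap A y)" by simp
  then show "x = y" using Lap_minv_Lap[OF Sh_inv[OF assms]] by simp
qed

lemma cf_one: "l \<in> L \<Longrightarrow> cf (mat 1) l = 1"
  by (rule cfI[OF Sh_one]) (simp_all add: Lap_one)

lemma cf_mul: assumes "A \<in> Sh" "B \<in> Sh" "l \<in> L"
  shows "cf (A ** B) l = cf A (Lap B l) * cf B l"
proof (rule cfI[OF Sh_mul[OF assms(1,2)] assms(3)])
  have "(A ** B) *v vv l = A *v (B *v vv l)" by (simp add: matrix_vector_mul_assoc)
  also have "\<dots> = A *v (cf B l *s vv (Lap B l))" using cf[OF assms(2,3)] by simp
  also have "\<dots> = cf B l *s (A *v vv (Lap B l))" by (simp add: vec.scale)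
  also have "\<dots> = cf B l *s (cf A (Lap B l) *s vv (Lap A (Lap B l)))"
    using cf[OF assms(1) Sh_line[OF assms(2,3)]] by simp
  also have "\<dots> = (cf A (Lap B l) * cf B l) *s vv (Lap (A ** B) l)"
    by (simp add: vector_smult_assoc Lap_mul mult.commute)
  finally show "(A ** B) *v vv l = (cf A (Lap B l) * cf B l) *s vv (Lap (A ** B) l)" .
qed

lemma conj_D: assumes "A \<in> Sh" "d \<in> D"
  shows "minv A ** d ** A \<in> D" "l \<in> L \<Longrightarrow> ev (minv A ** d ** A) l = ev d (Lap A l)"
proof -
  have iA: "invertible A" using Sh_inv[OF assms(1)] .
  have *: "(minv A ** d ** A) *v vv l = ev d (Lap A l) *s vv l" if l: "l \<in> L" for l
  proof -
    define m where "m = Lap A l"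
    define c where "c = cf A l"
    have mL: "m \<in> L" unfolding m_def using Sh_line[OF assms(1) l] .
    have Av: "A *v vv l = c *s vv m" unfolding c_def m_def using cf[OF assms(1) l] .
    have "(minv A ** d ** A) *v vv l = minv A *v (d *v (A *v vv l))"
      by (simp add: matrix_vector_mul_assoc matrix_mul_assoc)
    also have "\<dots> = minv A *v (d *v (c *s vv m))" by (simp only: Av)
    also have "\<dots> = minv A *v (c *s (ev d m *s vv m))" by (simp add: vec.scale evD[OF assms(2) mL])
    also have "\<dots> = minv A *v (ev d m *s (c *s vv m))" by (simp add: vector_smult_assoc mult.commute)
    also have "\<dots> = ev d m *s (minv A *v (A *v vv l))" by (simp add: vec.scale Av)
    also have "\<dots> = ev d m *s vv l" by (simp add: minv_v2[OF iA])
    finally show ?thesis unfolding m_def .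
  qed
  show "minv A ** d ** A \<in> D" unfolding D_def using * by blast
  show "l \<in> L \<Longrightarrow> ev (minv A ** d ** A) l = ev d (Lap A l)" using * evI by blast
qed

lemma eqv_Sh: assumes "A \<in> Sh" "l \<in> L" "l' \<in> L" "eqv l l'" shows "eqv (Lap A l) (Lap A l')"
  unfolding eqv_def
proof
  fix d assume d: "d \<in> D"
  have "ev d (Lap A l) = ev (minv A ** d ** A) l" using conj_D[OF assms(1) d] assms(2) by simp
  also have "\<dots> = ev (minv A ** d ** A) l'" using assms(4) conj_D(1)[OF assms(1) d] unfolding eqv_def by blast
  also have "\<dots> = ev d (Lap A l')" using conj_D[OF assms(1) d] assms(3) by simp
  finally show "ev d (Lap A l) = ev d (Lap A l')" .
qed

lemma cls_Sh: assumes "A \<in> Sh" "l \<in> L" shows "cls (Lap A l) = Lap A ` cls l"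
proof
  have iA: "invertible A" using Sh_inv[OF assms(1)] .
  show "Lap A ` cls l \<subseteq> cls (Lap A l)"
    using eqv_Sh[OF assms(1) assms(2)] Sh_line[OF assms(1)] unfolding cls_def by blast
  show "cls (Lap A l) \<subseteq> Lap A ` cls l"
  proof
    fix m assume m: "m \<in> cls (Lap A l)"
    then have mL: "m \<in> L" and e: "eqv (Lap A l) m" unfolding cls_def by auto
    define l' where "l' = Lap (minv A) m"
    have l'L: "l' \<in> L" unfolding l'_def using Sh_line[OF Sh_minv[OF assms(1)] mL] .
    have "eqv (Lap (minv A) (Lap A l)) (Lap (minv A) m)"
      using eqv_Sh[OF Sh_minv[OF assms(1)] Sh_line[OF assms] mL e] .
    then have "eqv l l'" unfolding l'_def Lap_minv_Lap[OF iA] .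
    then have "l' \<in> cls l" using l'L unfolding cls_def by blast
    moreover have "m = Lap A l'" unfolding l'_def using Lap_Lap_minv[OF iA] by simp
    ultimately show "m \<in> Lap A ` cls l" by blast
  qed
qed

definition Nm :: "'n matC \<Rightarrow> 'n vecC set \<Rightarrow> complex" where
  "Nm A l = prod (cf A) (cls l)"

lemma cls_sub: "cls l \<subseteq> L" unfolding cls_def by blast

lemma Nm_mul: assumes "A \<in> Sh" "B \<in> Sh" "l \<in> L" shows "Nm (A ** B) l = Nm A (Lap B l) * Nm B l"
proof -
  have "Nm (A ** B) l = (\<Prod>l'\<in>cls l. cf A (Lap B l') * cf B l')"
    unfolding Nm_def by (rule prod.cong) (use cf_mul[OF assms(1,2)] cls_sub in auto)
  also have "\<dots> = (\<Prod>l'\<in>cls l. cf A (Lap B l')) * Nm B l"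
    unfolding Nm_def by (rule prod.distrib)
  also have "(\<Prod>l'\<in>cls l. cf A (Lap B l')) = prod (cf A) (Lap B ` cls l)"
    using prod.reindex[OF Lap_inj[OF assms(2)], of "cf A"] by (simp add: comp_def)
  also have "\<dots> = Nm A (Lap B l)" unfolding Nm_def cls_Sh[OF assms(2,3)] ..
  finally show ?thesis .
qed

lemma Nm_one: "Nm (mat 1) l = 1"
  unfolding Nm_def using cf_one cls_sub by (simp add: subset_iff)

lemma Nm_nz: assumes "A \<in> Sh" shows "Nm A l \<noteq> 0"
  unfolding Nm_def using cls_fin cf_nz[OF assms] cls_sub by (auto simp: subset_iff)

definition G1 :: "'n matC set" where
  "G1 = {A \<in> Sh. \<forall>l\<in>L. (Nm A l)^2 = 1}"

lemma G1_Sh: "A \<in> G1 \<Longrightarrow> A \<in> Sh" unfolding G1_def by blast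

lemma G1_one: "mat 1 \<in> G1" unfolding G1_def by (simp add: Sh_one Nm_one)

lemma G1_mul: assumes "A \<in> G1" "B \<in> G1" shows "A ** B \<in> G1"
proof -
  have A: "A \<in> Sh" "\<forall>l\<in>L. (Nm A l)^2 = 1" and B: "B \<in> Sh" "\<forall>l\<in>L. (Nm B l)^2 = 1"
    using assms unfolding G1_def by auto
  have "(Nm (A ** B) l)^2 = 1" if "l \<in> L" for l
    using Nm_mul[OF A(1) B(1) that] A(2) B(2) Sh_line[OF B(1) that] that
    by (simp add: power_mult_distrib)
  then show ?thesis using Sh_mul[OF A(1) B(1)] unfolding G1_def by blast
qed

lemma G1_minv: assumes "A \<in> G1" shows "minv A \<in> G1"
proof -
  have A: "A \<in> Sh" "\<forall>l\<in>L. (Nm A l)^2 = 1" using assms unfolding G1_def by auto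
  have iA: "invertible A" using Sh_inv[OF A(1)] .
  have "(Nm (minv A) m)^2 = 1" if m: "m \<in> L" for m
  proof -
    obtain l where l: "l \<in> L" "m = Lap A l" using Sh_surj[OF A(1) m] by blast
    have "1 = Nm (minv A ** A) l" by (simp add: minv(2)[OF iA] Nm_one)
    also have "\<dots> = Nm (minv A) m * Nm A l" using Nm_mul[OF Sh_minv[OF A(1)] A(1) l(1)] l(2) by simp
    finally have "1 = (Nm (minv A) m)^2 * (Nm A l)^2" by (metis power_mult_distrib power_one)
    then show ?thesis using A(2) l(1) by simp
  qed
  then show ?thesis using Sh_minv[OF A(1)] unfolding G1_def by blast
qed

lemma DSh: assumes "E \<in> D" "invertible E"
  shows "E \<in> Sh" "\<And>l. l \<in> L \<Longrightarrow> Lap E l = l" "\<And>l. l \<in> L \<Longrightarrow> cf E l = ev E l"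
proof -
  have fx: "Lap E l = l" if l: "l \<in> L" for l
  proof -
    have ll: "is_line l" using lines[OF l] .
    have "E *v vv l \<noteq> 0"
      using vv(2)[OF ll] inv_inj[OF assms(2), of "vv l" 0] by auto
    moreover have "E *v vv l \<in> Lap E l" using vv(1)[OF ll] by (rule Lap_mem)
    moreover have "E *v vv l \<in> l" using evD[OF assms(1) l] line_smult[OF ll vv(1)[OF ll]] by simp
    ultimately show ?thesis using line_common[OF Lap_line(2)[OF ll assms(2)] ll] by blast
  qed
  have "Lap E ` L = L"
  proof -
    have "Lap E ` L = (\<lambda>l. l) ` L" by (rule image_cong) (simp_all add: fx)
    then show ?thesis by simp
  qed
  then show ES: "E \<in> Sh" using assms(2) unfolding Sh_def by blast
  show "\<And>l. l \<in> L \<Longrightarrow> Lap E l = l" using fx .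
  show "cf E l = ev E l" if l: "l \<in> L" for l
    by (rule cfI[OF ES l]) (simp add: fx[OF l] evD[OF assms(1) l])
qed

lemma Nm_D: assumes "E \<in> D" "invertible E" "l \<in> L" shows "Nm E l = ev E l ^ card (cls l)"
proof -
  have "Nm E l = (\<Prod>l'\<in>cls l. ev E l)"
    unfolding Nm_def
  proof (rule prod.cong)
    fix l' assume l': "l' \<in> cls l"
    then have "l' \<in> L" "eqv l l'" unfolding cls_def by auto
    then show "cf E l' = ev E l" using DSh(3)[OF assms(1,2)] assms(1) unfolding eqv_def by auto
  qed simp
  then show ?thesis by simp
qed

lemma eqv_cls: "eqv l l' \<Longrightarrow> cls l = cls l'"
  unfolding cls_def using eqv_sym eqv_trans by blast

lemma D_minv: assumes "E \<in> D" "invertible E" shows "minv E \<in> D"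
proof -
  have "\<exists>c. minv E *v vv l = c *s vv l" if l: "l \<in> L" for l
  proof -
    have "Lap (minv E) l = l" using Lap_minv_Lap[OF assms(2), of l] DSh(2)[OF assms l] by simp
    then have "minv E *v vv l \<in> l" using Lap_mem[OF vv(1)[OF lines[OF l]], of "minv E"] by simp
    then show ?thesis using line_mem[OF lines[OF l]] by blast
  qed
  then show ?thesis unfolding D_def by blast
qed

lemma D_invI: assumes "d \<in> D" "\<And>l. l \<in> L \<Longrightarrow> ev d l \<noteq> 0" shows "invertible d"
proof -
  have "\<exists>e\<in>D. \<forall>l\<in>L. ev e l = inverse (ev d l)"
    by (rule realize_simple) (use assms(1) in \<open>auto simp: eqv_def\<close>)
  then obtain e where e: "e \<in> D" "\<forall>l\<in>L. ev e l = inverse (ev d l)" by blast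
  have "e ** d = mat 1"
    by (rule D_ext) (use e assms D_mul D_mat ev_mul ev_mat in auto)
  then show ?thesis unfolding invertible_left_inverse by blast
qed

lemma surj: assumes A: "A \<in> Sh" shows "\<exists>d\<in>D. invertible d \<and> d ** A \<in> G1"
proof -
  have iA: "invertible A" using Sh_inv[OF A] .
  define psi where "psi m = (SOME z. z ^ card (cls m) = inverse (Nm A (Lap (minv A) m)))" for m
  have psi: "psi m ^ card (cls m) = inverse (Nm A (Lap (minv A) m))" if m: "m \<in> L" for m
  proof -
    have "inverse (Nm A (Lap (minv A) m)) \<noteq> 0" using Nm_nz[OF A] by simp
    moreover have "card (cls m) > 0" using cls_card[OF m] by simp
    ultimately have "\<exists>z. z ^ card (cls m) = inverse (Nm A (Lap (minv A) m))" by (rule ex_root)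
    then show ?thesis unfolding psi_def by (rule someI_ex)
  qed
  have psi_nz: "psi m \<noteq> 0" if m: "m \<in> L" for m
  proof
    assume "psi m = 0"
    then have "psi m ^ card (cls m) = 0" using cls_card[OF m] by simp
    then show False using psi[OF m] Nm_nz[OF A] by simp
  qed
  have "\<exists>d\<in>D. \<forall>l\<in>L. ev d l = psi l"
  proof (rule realize_simple)
    fix l l' assume l: "l \<in> L" "l' \<in> L" "eqv l l'"
    have "eqv (Lap (minv A) l) (Lap (minv A) l')" using eqv_Sh[OF Sh_minv[OF A] l] .
    then have "cls (Lap (minv A) l) = cls (Lap (minv A) l')" by (rule eqv_cls)
    moreover have "cls l = cls l'" using l(3) by (rule eqv_cls)
    ultimately show "psi l = psi l'" unfolding psi_def Nm_def by simp
  qed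
  then obtain d where d: "d \<in> D" "\<forall>l\<in>L. ev d l = psi l" by blast
  have id: "invertible d" using D_invI[OF d(1)] d(2) psi_nz by simp
  have dA: "d ** A \<in> Sh" using Sh_mul[OF DSh(1)[OF d(1) id] A] .
  have "Nm (d ** A) l = 1" if l: "l \<in> L" for l
  proof -
    have mL: "Lap A l \<in> L" using Sh_line[OF A l] .
    have "Nm (d ** A) l = Nm d (Lap A l) * Nm A l" using Nm_mul[OF DSh(1)[OF d(1) id] A l] .
    also have "Nm d (Lap A l) = psi (Lap A l) ^ card (cls (Lap A l))"
      using Nm_D[OF d(1) id mL] d(2) mL by simp
    also have "\<dots> = inverse (Nm A l)" using psi[OF mL] Lap_minv_Lap[OF iA] by simp
    finally show ?thesis using Nm_nz[OF A] by simp
  qed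
  then have "d ** A \<in> G1" using dA unfolding G1_def by simp
  then show ?thesis using d(1) id by blast
qed

definition J :: "'n vecC set \<Rightarrow> 'n matC" where
  "J l0 = mat 2 ** Pr l0 - mat 1"

lemma J: assumes "l0 \<in> L"
  shows "J l0 \<in> D" "\<And>l. l \<in> L \<Longrightarrow> ev (J l0) l = (if eqv l0 l then 1 else -1)"
proof -
  show JD: "J l0 \<in> D" unfolding J_def by (intro D_diff D_smul Pr(1)[OF assms] D_mat)
  show "ev (J l0) l = (if eqv l0 l then 1 else -1)" if l: "l \<in> L" for l
    unfolding J_def using l by (simp add: ev_diff ev_smul D_smul Pr[OF assms] D_mat ev_mat)
qed

lemma J_inv: assumes "l0 \<in> L" shows "invertible (J l0)"
  by (rule D_invI[OF J(1)[OF assms]]) (simp add: J(2)[OF assms])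

lemma J_G1: assumes "l0 \<in> L" shows "J l0 \<in> G1"
proof -
  have JS: "J l0 \<in> Sh" using DSh(1)[OF J(1)[OF assms] J_inv[OF assms]] .
  have "(Nm (J l0) l)^2 = 1" if l: "l \<in> L" for l
  proof -
    have "(Nm (J l0) l)^2 = (\<Prod>l'\<in>cls l. (cf (J l0) l')^2)" unfolding Nm_def by (rule prod_power_distrib)
    also have "\<dots> = (\<Prod>l'\<in>cls l. 1)"
    proof (rule prod.cong)
      fix l' assume "l' \<in> cls l"
      then have l': "l' \<in> L" unfolding cls_def by blast
      show "(cf (J l0) l')^2 = 1"
        using DSh(3)[OF J(1)[OF assms] J_inv[OF assms] l'] J(2)[OF assms l'] by simp
    qed simp
    finally show ?thesis by simp
  qed
  then show ?thesis using JS unfolding G1_def by blast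
qed

lemma J_fix: "l0 \<in> L \<Longrightarrow> l \<in> L \<Longrightarrow> Lap (J l0) l = l"
  using DSh(2)[OF J(1) J_inv] by blast

lemma Pr_J: assumes "l0 \<in> L" shows "Pr l0 = mat (1/2) ** (J l0 + mat 1)"
  by (rule D_ext[OF Pr(1)[OF assms]]) 
    (use assms in \<open>simp_all add: D_smul D_add J(1) D_mat ev_smul ev_add ev_mat J(2) Pr(2)\<close>)

lemma D_good2:
  assumes G0: "Good (mat 0)" and G1': "Good (mat 1)" and Gadd: "\<And>A B. Good A \<Longrightarrow> Good B \<Longrightarrow> Good (A + B)"
    and Gsm: "\<And>A k. Good A \<Longrightarrow> Good (mat k ** A)" and GJ: "\<And>l. l \<in> L \<Longrightarrow> Good (J l)"
    and e: "e \<in> D"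
  shows "Good e"
proof (rule D_good[OF G0 Gadd Gsm _ e])
  fix l assume "l \<in> L"
  then show "Good (Pr l)" unfolding Pr_J[OF \<open>l \<in> L\<close>] by (intro Gsm Gadd GJ G1')
qed

end


context LS
begin

lemma G1_D_fin: "finite (G1 \<inter> D)"
proof -
  define R where "R = (\<Union>k\<in>{1..card L}. {z::complex. z ^ (k*2) = 1})"
  have finR: "finite R" unfolding R_def by (intro finite_UN_I) (auto intro: finite_roots_unity)
  define f where "f E = restrict (ev E) L" for E
  have inj: "inj_on f (G1 \<inter> D)"
  proof
    fix E E' assume E: "E \<in> G1 \<inter> D" and E': "E' \<in> G1 \<inter> D" and eq: "f E = f E'"
    have "ev E l = ev E' l" if "l \<in> L" for l
      using fun_cong[OF eq, of l] that unfolding f_def by simp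
    then show "E = E'" using D_ext E E' by blast
  qed
  have sub: "f ` (G1 \<inter> D) \<subseteq> PiE L (\<lambda>_. R)"
  proof
    fix y assume "y \<in> f ` (G1 \<inter> D)"
    then obtain E where E: "E \<in> G1" "E \<in> D" "y = f E" by blast
    have iE: "invertible E" using Sh_inv[OF G1_Sh[OF E(1)]] .
    have "ev E l \<in> R" if l: "l \<in> L" for l
    proof -
      have "(Nm E l)^2 = 1" using E(1) l unfolding G1_def by blast
      then have "(ev E l ^ card (cls l))^2 = 1" using Nm_D[OF E(2) iE l] by simp
      then have "ev E l ^ (card (cls l) * 2) = 1" by (simp only: power_mult)
      then show ?thesis unfolding R_def using cls_card[OF l] by auto
    qed
    then show "y \<in> PiE L (\<lambda>_. R)" unfolding E(3) f_def by auto
  qed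
  have "finite (PiE L (\<lambda>_. R))" using fin finR by (simp add: finite_PiE)
  then have "finite (f ` (G1 \<inter> D))" using sub finite_subset by blast
  then show ?thesis using inj finite_image_iff by blast
qed

lemma G1_fin: "finite G1"
proof -
  define sig where "sig A = restrict (Lap A) L" for A
  define rep where "rep \<sigma> = (SOME B. B \<in> G1 \<and> sig B = \<sigma>)" for \<sigma>
  have finSig: "finite (sig ` G1)"
  proof -
    have "sig ` G1 \<subseteq> PiE L (\<lambda>_. L)"
      unfolding sig_def using Sh_line G1_Sh by auto
    moreover have "finite (PiE L (\<lambda>_. L))" using fin by (simp add: finite_PiE)
    ultimately show ?thesis using finite_subset by blast
  qed
  have "G1 \<subseteq> (\<lambda>(B, E). B ** E) ` ((rep ` sig ` G1) \<times> (G1 \<inter> D))"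
  proof
    fix A assume A: "A \<in> G1"
    define B where "B = rep (sig A)"
    have "\<exists>B. B \<in> G1 \<and> sig B = sig A" using A by blast
    then have "B \<in> G1 \<and> sig B = sig A" unfolding B_def rep_def by (rule someI_ex)
    then have B: "B \<in> G1" "sig B = sig A" by auto
    have iB: "invertible B" using Sh_inv[OF G1_Sh[OF B(1)]] .
    define E where "E = minv B ** A"
    have EG: "E \<in> G1" unfolding E_def using G1_mul[OF G1_minv[OF B(1)] A] .
    have "\<exists>c. E *v vv l = c *s vv l" if l: "l \<in> L" for l
    proof -
      have "Lap A l = Lap B l" using fun_cong[OF B(2), of l] l unfolding sig_def by simp
      then have "Lap E l = l" unfolding E_def Lap_mul using Lap_minv_Lap[OF iB] by simp
      then have "E *v vv l \<in> l" using Lap_mem[OF vv(1)[OF lines[OF l]], of E] by simp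
      then show ?thesis using line_mem[OF lines[OF l]] by blast
    qed
    then have ED: "E \<in> D" unfolding D_def by blast
    have "B ** E = A" unfolding E_def by (simp add: matrix_mul_assoc minv(1)[OF iB])
    moreover have "B \<in> rep ` sig ` G1" unfolding B_def using A by blast
    ultimately show "A \<in> (\<lambda>(B, E). B ** E) ` ((rep ` sig ` G1) \<times> (G1 \<inter> D))"
      using EG ED by force
  qed
  moreover have "finite ((\<lambda>(B, E). B ** E) ` ((rep ` sig ` G1) \<times> (G1 \<inter> D)))"
    using finSig G1_D_fin by simp
  ultimately show ?thesis using finite_subset by blast
qed

end


context LS
begin

lemma papply: "l \<in> L \<Longrightarrow> pgl_apply (pgl_class M) l = Lap M l"
  by (rule pgl_apply_class[OF cone_line[OF lines]])

lemma Sym_E: assumes "h \<in> Sym L" shows "\<exists>M\<in>Sh. h = pgl_class M"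
proof -
  have hP: "h \<in> PGL" and hL: "pgl_apply h ` L = L" using assms unfolding Sym_def by auto
  obtain M where M: "invertible M" "h = pgl_class M" using hP by (rule PGL_memE)
  have "Lap M ` L = pgl_apply h ` L" by (rule image_cong) (simp_all add: M(2) papply)
  then have "Lap M ` L = L" using hL by simp
  then have "M \<in> Sh" using M(1) unfolding Sh_def by blast
  then show ?thesis using M(2) by blast
qed

lemma Sym_I: assumes "M \<in> Sh" shows "pgl_class M \<in> Sym L"
proof -
  have "pgl_apply (pgl_class M) ` L = Lap M ` L" by (rule image_cong) (simp_all add: papply)
  also have "\<dots> = L" using assms unfolding Sh_def by blast
  finally show ?thesis using PGL_memI[OF Sh_inv[OF assms]] unfolding Sym_def by blast
qed

end

theorem mainTheorem1:
  fixes L :: "('n::finite) vecC set set"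
  assumes "highly_symmetric L"
  shows "\<exists>G. subgroup G PGL_group \<and> finite G \<and> G \<subseteq> Sym L
           \<and> proj_irreducible G
           \<and> transitive_on G L
           \<and> (\<forall>l\<in>L. \<not> (\<exists>W. vec.subspace W \<and> l \<subset> W \<and>
                 (\<forall>g\<in>stab G l. \<forall>m. is_line m \<and> m \<subseteq> W \<longrightarrow> pgl_apply g m = m)))"
proof -
  have hsL: "line_system L" and hirr: "proj_irreducible (Sym L)" and htr: "transitive_on (Sym L) L"
    and htop: "\<forall>l\<in>L. \<exists>N. openin proj_top N \<and> l \<in> N \<and>
            (\<forall>m\<in>N. is_line m \<and> m \<noteq> l \<longrightarrow> \<not> (\<forall>h\<in>stab (Sym L) l. pgl_apply h m = m))"
    using assms unfolding highly_symmetric_def by auto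
  interpret LS L by unfold_locales (rule hsL)
  define G where "G = pgl_class ` G1"
  have sub: "subgroup G PGL_group"
  proof (rule group.subgroupI[OF group_PGL])
    show "G \<subseteq> carrier PGL_group" unfolding G_def PGL_carrier using PGL_memI Sh_inv G1_Sh by blast
  next
    show "G \<noteq> {}" unfolding G_def using G1_one by blast
  next
    fix a assume "a \<in> G"
    then obtain A where A: "A \<in> G1" "a = pgl_class A" unfolding G_def by blast
    show "inv\<^bsub>PGL_group\<^esub> a \<in> G"
      unfolding A(2) PGL_inv[OF Sh_inv[OF G1_Sh[OF A(1)]]] G_def using G1_minv[OF A(1)] by blast
  next
    fix a b assume "a \<in> G" "b \<in> G"
    then obtain A B where A: "A \<in> G1" "a = pgl_class A" and B: "B \<in> G1" "b = pgl_class B"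
      unfolding G_def by blast
    show "a \<otimes>\<^bsub>PGL_group\<^esub> b \<in> G"
      unfolding A(2) B(2) PGL_mult_class G_def using G1_mul[OF A(1) B(1)] by blast
  qed
  have finG: "finite G" unfolding G_def using G1_fin by simp
  have GSym: "G \<subseteq> Sym L" unfolding G_def using Sym_I G1_Sh by blast
  have irrG: "proj_irreducible G"
    unfolding proj_irreducible_def
  proof
    assume "\<exists>W. vec.subspace W \<and> W \<noteq> {0} \<and> W \<noteq> UNIV \<and> (\<forall>g\<in>G. pgl_apply g W = W)"
    then obtain W where W: "vec.subspace W" "W \<noteq> {0}" "W \<noteq> UNIV" "\<forall>g\<in>G. pgl_apply g W = W" by blast
    have G1W: "Lap A W = W" if "A \<in> G1" for A
      using W(4) that pgl_apply_class[OF cone_subspace[OF W(1)], of A] unfolding G_def by auto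
    have DW: "Lap e W \<subseteq> W" if e: "e \<in> D" for e
    proof (rule D_good2[where Good = "\<lambda>A. Lap A W \<subseteq> W", OF _ _ _ _ _ e])
      show "Lap (mat 0) W \<subseteq> W" unfolding Lap_def using vec.subspace_0[OF W(1)] by (auto simp: mat_mulv)
      show "Lap (mat 1) W \<subseteq> W" by (simp add: Lap_one)
      show "Lap (A + B) W \<subseteq> W" if "Lap A W \<subseteq> W" "Lap B W \<subseteq> W" for A B
        using that vec.subspace_add[OF W(1)] unfolding Lap_def
        by (auto simp: matrix_vector_mult_add_rdistrib)
      show "Lap (mat k ** A) W \<subseteq> W" if "Lap A W \<subseteq> W" for A k
        using that vec.subspace_scale[OF W(1)] unfolding Lap_def by (auto simp: mat_mulv2)
      show "Lap (J l) W \<subseteq> W" if "l \<in> L" for l using G1W[OF J_G1[OF that]] by simp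
    qed
    have "pgl_apply g W = W" if g: "g \<in> Sym L" for g
    proof -
      obtain M where M: "M \<in> Sh" "g = pgl_class M" using Sym_E[OF g] by blast
      obtain d where d: "d \<in> D" "invertible d" "d ** M \<in> G1" using surj[OF M(1)] by blast
      have "Lap d (Lap M W) = W" using G1W[OF d(3)] by (simp add: Lap_mul)
      then have 1: "Lap M W = Lap (minv d) W" using Lap_minv_Lap[OF d(2), of "Lap M W"] by simp
      have 2: "Lap (minv d) W \<subseteq> W" using DW[OF D_minv[OF d(1,2)]] .
      have "W = Lap (minv d) (Lap d W)" using Lap_minv_Lap[OF d(2)] by simp
      also have "\<dots> \<subseteq> Lap (minv d) W" using DW[OF d(1)] unfolding Lap_def by blast
      finally have "Lap (minv d) W = W" using 2 by blast
      then show ?thesis unfolding M(2) pgl_apply_class[OF cone_subspace[OF W(1)]] using 1 by simp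
    qed
    then show False using hirr W(1,2,3) unfolding proj_irreducible_def by blast
  qed
  have trG: "transitive_on G L"
    unfolding transitive_on_def
  proof (intro ballI)
    fix l m assume l: "l \<in> L" and m: "m \<in> L"
    obtain g where g: "g \<in> Sym L" "pgl_apply g l = m" using htr l m unfolding transitive_on_def by blast
    obtain M where M: "M \<in> Sh" "g = pgl_class M" using Sym_E[OF g(1)] by blast
    have Ml: "Lap M l = m" using g(2) papply[OF l] M(2) by simp
    obtain d where d: "d \<in> D" "invertible d" "d ** M \<in> G1" using surj[OF M(1)] by blast
    have "pgl_apply (pgl_class (d ** M)) l = m"
      using papply[OF l] Ml DSh(2)[OF d(1,2) m] by (simp add: Lap_mul)
    moreover have "pgl_class (d ** M) \<in> G" unfolding G_def using d(3) by blast
    ultimately show "\<exists>g\<in>G. pgl_apply g l = m" by blast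
  qed
  have stG: "\<forall>l\<in>L. \<not> (\<exists>W. vec.subspace W \<and> l \<subset> W \<and>
                 (\<forall>g\<in>stab G l. \<forall>m. is_line m \<and> m \<subseteq> W \<longrightarrow> pgl_apply g m = m))"
  proof (intro ballI notI)
    fix l assume lL: "l \<in> L"
    assume "\<exists>W. vec.subspace W \<and> l \<subset> W \<and>
                 (\<forall>g\<in>stab G l. \<forall>m. is_line m \<and> m \<subseteq> W \<longrightarrow> pgl_apply g m = m)"
    then obtain W where W: "vec.subspace W" "l \<subset> W"
      "\<forall>g\<in>stab G l. \<forall>m. is_line m \<and> m \<subseteq> W \<longrightarrow> pgl_apply g m = m" by blast
    have ll: "is_line l" using lines[OF lL] .
    have G1good: "\<forall>m. is_line m \<and> m \<subseteq> W \<longrightarrow> Lap A m \<subseteq> m" if A: "A \<in> G1" "Lap A l = l" for A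
    proof (intro allI impI)
      fix m assume m: "is_line m \<and> m \<subseteq> W"
      have "pgl_class A \<in> stab G l" unfolding stab_def G_def using A papply[OF lL] by auto
      then have "pgl_apply (pgl_class A) m = m" using W(3) m by blast
      then show "Lap A m \<subseteq> m" using pgl_apply_class[OF cone_line, of m A] m by simp
    qed
    have Dgood: "\<forall>m. is_line m \<and> m \<subseteq> W \<longrightarrow> Lap e m \<subseteq> m" if e: "e \<in> D" for e
    proof (rule D_good2[where Good = "\<lambda>A. \<forall>m. is_line m \<and> m \<subseteq> W \<longrightarrow> Lap A m \<subseteq> m", OF _ _ _ _ _ e])
      show "\<forall>m. is_line m \<and> m \<subseteq> W \<longrightarrow> Lap (mat 0) m \<subseteq> m"
      proof (intro allI impI subsetI)
        fix m y assume m: "is_line m \<and> m \<subseteq> W" and y: "y \<in> Lap (mat 0) m"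
        then obtain x where "y = mat 0 *v x" unfolding Lap_def by blast
        then have "y = 0" by (simp add: mat_mulv)
        then show "y \<in> m" using line_zero m by blast
      qed
      show "\<forall>m. is_line m \<and> m \<subseteq> W \<longrightarrow> Lap (mat 1) m \<subseteq> m"
      proof (intro allI impI)
        fix m show "Lap (mat 1) m \<subseteq> m" unfolding Lap_one by (rule order_refl)
      qed
      show "\<forall>m. is_line m \<and> m \<subseteq> W \<longrightarrow> Lap (A + B) m \<subseteq> m"
        if AB: "\<forall>m. is_line m \<and> m \<subseteq> W \<longrightarrow> Lap A m \<subseteq> m" "\<forall>m. is_line m \<and> m \<subseteq> W \<longrightarrow> Lap B m \<subseteq> m" for A B
      proof (intro allI impI subsetI)
        fix m y assume m: "is_line m \<and> m \<subseteq> W" and y: "y \<in> Lap (A + B) m"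
        then obtain x where x: "x \<in> m" "y = (A + B) *v x" unfolding Lap_def by blast
        have "A *v x \<in> m" using AB(1) m Lap_mem[OF x(1), of A] by blast
        moreover have "B *v x \<in> m" using AB(2) m Lap_mem[OF x(1), of B] by blast
        ultimately have "A *v x + B *v x \<in> m" using line_add m by blast
        then show "y \<in> m" unfolding x(2) matrix_vector_mult_add_rdistrib .
      qed
      show "\<forall>m. is_line m \<and> m \<subseteq> W \<longrightarrow> Lap (mat k ** A) m \<subseteq> m"
        if A: "\<forall>m. is_line m \<and> m \<subseteq> W \<longrightarrow> Lap A m \<subseteq> m" for A k
      proof (intro allI impI subsetI)
        fix m y assume m: "is_line m \<and> m \<subseteq> W" and y: "y \<in> Lap (mat k ** A) m"
        then obtain x where x: "x \<in> m" "y = (mat k ** A) *v x" unfolding Lap_def by blast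
        have "A *v x \<in> m" using A m Lap_mem[OF x(1), of A] by blast
        then have "k *s (A *v x) \<in> m" using line_smult m by blast
        then show "y \<in> m" unfolding x(2) mat_mulv2 .
      qed
      show "\<forall>m. is_line m \<and> m \<subseteq> W \<longrightarrow> Lap (J l') m \<subseteq> m" if "l' \<in> L" for l'
        by (rule G1good[OF J_G1[OF that] J_fix[OF that lL]])
    qed
    have hfix: "\<forall>h\<in>stab (Sym L) l. pgl_apply h m = m" if m: "is_line m" "m \<subseteq> W" for m
    proof
      fix h assume "h \<in> stab (Sym L) l"
      then have h: "h \<in> Sym L" "pgl_apply h l = l" unfolding stab_def by auto
      obtain M where M: "M \<in> Sh" "h = pgl_class M" using Sym_E[OF h(1)] by blast
      have iM: "invertible M" using Sh_inv[OF M(1)] .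
      have Ml: "Lap M l = l" using h(2) papply[OF lL] M(2) by simp
      obtain d where d: "d \<in> D" "invertible d" "d ** M \<in> G1" using surj[OF M(1)] by blast
      have "Lap (d ** M) l = l" using Ml DSh(2)[OF d(1,2) lL] by (simp add: Lap_mul)
      then have 1: "Lap (d ** M) m \<subseteq> m" using G1good[OF d(3)] m by blast
      have 2: "Lap (minv d) m \<subseteq> m" using Dgood[OF D_minv[OF d(1,2)]] m by blast
      have "M = minv d ** (d ** M)" by (simp add: matrix_mul_assoc minv(2)[OF d(2)])
      then have "Lap M m = Lap (minv d) (Lap (d ** M) m)" by (simp add: Lap_mul[symmetric])
      also have "\<dots> \<subseteq> Lap (minv d) m" using 1 unfolding Lap_def by blast
      finally have sub: "Lap M m \<subseteq> m" using 2 by blast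
      have "M *v vv m \<noteq> 0" using vv(2)[OF m(1)] inv_inj[OF iM, of "vv m" 0] by auto
      moreover have "M *v vv m \<in> Lap M m" using vv(1)[OF m(1)] by (rule Lap_mem)
      ultimately have "Lap M m = m" using line_common[OF Lap_line(2)[OF m(1) iM] m(1)] sub by blast
      then show "pgl_apply h m = m" unfolding M(2) pgl_apply_class[OF cone_line[OF m(1)]] .
    qed
    obtain N where N: "openin proj_top N" "l \<in> N"
      "\<forall>m\<in>N. is_line m \<and> m \<noteq> l \<longrightarrow> \<not> (\<forall>h\<in>stab (Sym L) l. pgl_apply h m = m)"
      using htop lL by blast
    have "openin proj_top = (proj_open :: 'n vecC set set \<Rightarrow> bool)"
      unfolding proj_top_def by (rule topology_inverse'[OF istopology_proj_open])
    then have "proj_open N" using N(1) by simp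
    then have Nl: "\<forall>m\<in>N. is_line m" and No: "open (\<Union>N - {0})" unfolding proj_open_def by auto
    define x where "x = vv l"
    have x: "x \<in> l" "x \<noteq> 0" unfolding x_def using vv[OF ll] by auto
    then have "x \<in> \<Union>N - {0}" using N(2) by blast
    then obtain e where e: "e > 0" "ball x e \<subseteq> \<Union>N - {0}" using No open_contains_ball by blast
    obtain v where v: "v \<in> W" "v \<notin> l" using W(2) by blast
    define t where "t = e / (2 * (norm v + 1))"
    have d1: "(0::real) < norm v + 1" by (rule add_nonneg_pos) simp_all
    have d2: "(0::real) < 2 * (norm v + 1)" by (rule mult_pos_pos[OF _ d1]) simp
    have t: "t > 0" unfolding t_def by (rule divide_pos_pos[OF e(1) d2])
    have "t * norm v < t * (norm v + 1)" using t by simp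
    also have "\<dots> = e / 2" using d2 unfolding t_def by (simp add: field_simps)
    also have "\<dots> < e" using e(1) by simp
    finally have tv: "t * norm v < e" .
    define y where "y = x + t *\<^sub>R v"
    have ty: "t *\<^sub>R v = complex_of_real t *s v"
    proof (rule vec_eq_iff[THEN iffD2], rule allI)
      fix i
      have "(t *\<^sub>R v) $ i = t *\<^sub>R (v $ i)" by (rule vector_scaleR_component)
      also have "\<dots> = complex_of_real t * v $ i" by (rule scaleR_conv_of_real)
      also have "\<dots> = (complex_of_real t *s v) $ i" by simp
      finally show "(t *\<^sub>R v) $ i = (complex_of_real t *s v) $ i" .
    qed
    have "dist x y = norm (t *\<^sub>R v)" unfolding y_def by (simp add: dist_norm)
    also have "\<dots> = t * norm v" using t by simp
    finally have "y \<in> ball x e" using tv by (simp add: dist_commute)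
    then have "y \<in> \<Union>N - {0}" using e(2) by blast
    then have y: "y \<in> \<Union>N" "y \<noteq> 0" by blast+
    then obtain m where m: "m \<in> N" "y \<in> m" by blast
    have ml: "is_line m" using Nl m(1) by blast
    have yl: "y \<notin> l"
    proof
      assume "y \<in> l"
      then have "y - x \<in> l" using line_sub[OF ll _ x(1)] by blast
      then have "complex_of_real t *s v \<in> l" unfolding y_def ty by simp
      then have "inverse (complex_of_real t) *s (complex_of_real t *s v) \<in> l" by (rule line_smult[OF ll])
      then have "v \<in> l" using t by (simp add: vector_smult_assoc)
      then show False using v(2) by simp
    qed
    have mneq: "m \<noteq> l" using m(2) yl by blast
    have yW: "y \<in> W"
      unfolding y_def ty using W(2) x(1) v(1) vec.subspace_add[OF W(1)] vec.subspace_scale[OF W(1)] by blast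
    have "m = range (\<lambda>c. c *s y)" using is_line_eq[OF ml m(2) y(2)] .
    then have mW: "m \<subseteq> W" using yW vec.subspace_scale[OF W(1)] by blast
    show False using N(3) m(1) ml mneq hfix[OF ml mW] by blast
  qed
  show ?thesis using sub finG GSym irrG trG stG by blast
qed

end
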